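(* Let $M,N$ be weight sequences with $m_k^{1/k}\to\infty$, $n_k^{1/k}\to\infty$ and $C:=\mathrm{mg}(M,N)<\infty$. Then $h_m(t)\le C^jn_jt^jh_n(Ct)$ for all $t>0$ and $j\in\mathbb{N}$, and $h_m(t)\le h_n\big(\tfrac{eC}{2}t\big)^2$ for all $t>0$.
   Context: A weight sequence is a sequence $M=(M_k)_{k\ge0}$ of positive reals with $M_k=\mu_1\cdots\mu_k$, $M_0=1$, where $(\mu_k)$ is positive and increasing with $\mu_0=1$, and $M_k^{1/k}\to\infty$; $m_k:=M_k/k!$, $n_k:=N_k/k!$. For a positive sequence $m$ with $m_0=1$ and $m_k^{1/k}\to\infty$, $h_m(t):=\inf_{k\in\mathbb{N}}m_kt^k$ for $t>0$. For positive sequences, $\mathrm{mg}(M,N):=\sup_{j,k\ge0,j+k\ge1}(M_{j+k}/(N_jN_k))^{1/(j+k)}\in(0,\infty]$. *)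

theory Defs
  imports "HOL-Analysis.Analysis"
begin

definition weight_sequence :: "(nat \<Rightarrow> real) \<Rightarrow> bool" where
  "weight_sequence M \<longleftrightarrow>
     (\<exists>\<mu> :: nat \<Rightarrow> real. (\<forall>k. 0 < \<mu> k) \<and> mono \<mu> \<and> \<mu> 0 = 1 \<and>
        (\<forall>k. M k = (\<Prod>i\<in>{1..k}. \<mu> i))) \<and>
     filterlim (\<lambda>k. M k powr (1 / real k)) at_top sequentially"

definition small_seq :: "(nat \<Rightarrow> real) \<Rightarrow> nat \<Rightarrow> real" where
  "small_seq M k = M k / fact k"

definition hfun :: "(nat \<Rightarrow> real) \<Rightarrow> real \<Rightarrow> real" where
  "hfun m t = (INF k. m k * t ^ k)"

definition mg :: "(nat \<Rightarrow> real) \<Rightarrow> (nat \<Rightarrow> real) \<Rightarrow> ereal" where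
  "mg M N = (SUP p \<in> {(j, k). 1 \<le> j + k}.
      ereal ((M (fst p + snd p) / (N (fst p) * N (snd p))) powr (1 / real (fst p + snd p))))"

end

theory Submission
  imports Defs
begin

lemma fact_mult_le_real: "(fact j :: real) * fact k \<le> fact (j + k)"
proof -
  have "fact j * fact (j + k - j) * ((j + k) choose j) = (fact (j + k) :: nat)"
    by (rule binomial_fact_lemma) simp
  hence e: "fact j * fact k * ((j + k) choose j) = (fact (j + k) :: nat)" by simp
  have "(j + k) choose j \<ge> 1" by (simp add: Suc_leI)
  hence "fact j * fact k \<le> (fact (j + k) :: nat)"
    by (metis e mult.right_neutral mult_le_mono2)
  hence "real (fact j * fact k) \<le> real (fact (j + k))" by linarith
  thus ?thesis by (simp only: of_nat_mult of_nat_fact)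
qed

lemma ws_pos: "weight_sequence M \<Longrightarrow> M k > 0"
  unfolding weight_sequence_def by (auto intro!: prod_pos)

lemma ws_0: "weight_sequence M \<Longrightarrow> M 0 = 1"
  unfolding weight_sequence_def by auto

lemma hfun_lower:
  assumes "\<And>k. m k > 0" "t > 0"
  shows "hfun m t \<le> m i * t ^ i"
  unfolding hfun_def
  by (rule cINF_lower) (auto intro!: bdd_belowI[where m=0] simp: assms less_imp_le)

lemma hfun_nonneg:
  assumes "\<And>k. m k > 0" "t > 0"
  shows "hfun m t \<ge> 0"
  unfolding hfun_def
  by (rule cINF_greatest) (auto simp: assms less_imp_le)

theorem lemma5p1:
  fixes M N :: "nat \<Rightarrow> real" and C :: real
  assumes "weight_sequence M" and "weight_sequence N"
    and "filterlim (\<lambda>k. small_seq M k powr (1 / real k)) at_top sequentially"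
    and "filterlim (\<lambda>k. small_seq N k powr (1 / real k)) at_top sequentially"
    and "mg M N = ereal C"
  shows "(\<forall>t>0. \<forall>j::nat. hfun (small_seq M) t
            \<le> C ^ j * small_seq N j * t ^ j * hfun (small_seq N) (C * t))
       \<and> (\<forall>t>0. hfun (small_seq M) t \<le> (hfun (small_seq N) (exp 1 * C / 2 * t)) ^ 2)"
proof -
  have Mp: "\<And>k. M k > 0" using ws_pos[OF assms(1)] .
  have Np: "\<And>k. N k > 0" using ws_pos[OF assms(2)] .
  have M0: "M 0 = 1" using ws_0[OF assms(1)] .
  have N0: "N 0 = 1" using ws_0[OF assms(2)] .
  have mp: "\<And>k. small_seq M k > 0" using Mp by (simp add: small_seq_def)
  have np: "\<And>k. small_seq N k > 0" using Np by (simp add: small_seq_def)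
  have le: "(M (j + k) / (N j * N k)) powr (1 / real (j + k)) \<le> C" if "1 \<le> j + k" for j k
  proof -
    have "ereal ((M (fst (j,k) + snd (j,k)) / (N (fst (j,k)) * N (snd (j,k)))) powr (1 / real (fst (j,k) + snd (j,k)))) \<le> mg M N"
      unfolding mg_def by (rule SUP_upper) (use that in auto)
    thus ?thesis using assms(5) by simp
  qed
  have Cpos: "C > 0"
  proof -
    have "(M (1 + 0) / (N 1 * N 0)) powr (1 / real (1 + 0)) \<le> C" by (rule le) simp
    moreover have "(M (1 + 0) / (N 1 * N 0)) powr (1 / real (1 + 0)) > 0" using Mp[of 1] Np[of 1] Np[of 0] by (simp add: abs_of_pos)
    ultimately show ?thesis by linarith
  qed
  have key: "M (j + k) \<le> C ^ (j + k) * (N j * N k)" for j k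
  proof (cases "j + k = 0")
    case True thus ?thesis using M0 N0 by simp
  next
    case False
    define r where "r = M (j + k) / (N j * N k)"
    have r: "r > 0" using Mp Np by (simp add: r_def)
    have "r powr (1 / real (j + k)) \<le> C" using le[of j k] False by (simp add: r_def)
    hence "(r powr (1 / real (j + k))) ^ (j + k) \<le> C ^ (j + k)"
      by (intro power_mono) auto
    also have "(r powr (1 / real (j + k))) ^ (j + k) = r"
      using r False by (simp add: powr_realpow[symmetric] powr_powr add_nonneg_eq_0_iff) linarith
    finally have "r \<le> C ^ (j + k)" .
    thus ?thesis using Np by (simp add: r_def field_simps)
  qed
  have keym: "small_seq M (j + k) \<le> C ^ (j + k) * (small_seq N j * small_seq N k)" for j k
  proof -
    have "small_seq M (j + k) = M (j + k) / fact (j + k)" by (simp add: small_seq_def)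
    also have "\<dots> \<le> C ^ (j + k) * (N j * N k) / fact (j + k)"
      by (intro divide_right_mono key) auto
    also have "\<dots> \<le> C ^ (j + k) * (N j * N k) / (fact j * fact k)"
      using Np[of j] Np[of k] Cpos by (intro divide_left_mono fact_mult_le_real) (auto intro!: mult_pos_pos mult_nonneg_nonneg)
    also have "\<dots> = C ^ (j + k) * (small_seq N j * small_seq N k)"
      by (simp add: small_seq_def)
    finally show ?thesis .
  qed
  have part1: "hfun (small_seq M) t \<le> C ^ j * small_seq N j * t ^ j * hfun (small_seq N) (C * t)"
    if t: "t > 0" for t j
  proof -
    define c where "c = C ^ j * small_seq N j * t ^ j"
    have c: "c > 0" using Cpos np t by (simp add: c_def)
    have "hfun (small_seq M) t / c \<le> small_seq N k * (C * t) ^ k" for k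
    proof -
      have "hfun (small_seq M) t \<le> small_seq M (j + k) * t ^ (j + k)"
        by (rule hfun_lower[OF mp t])
      also have "\<dots> \<le> C ^ (j + k) * (small_seq N j * small_seq N k) * t ^ (j + k)"
        using t by (intro mult_right_mono keym) auto
      also have "\<dots> = c * (small_seq N k * (C * t) ^ k)"
        by (simp add: c_def power_add power_mult_distrib)
      finally show ?thesis using c by (simp add: field_simps)
    qed
    hence "hfun (small_seq M) t / c \<le> hfun (small_seq N) (C * t)"
      unfolding hfun_def by (intro cINF_greatest) auto
    thus ?thesis using c by (simp add: c_def field_simps)
  qed
  have part2: "hfun (small_seq M) t \<le> (hfun (small_seq N) (exp 1 * C / 2 * t)) ^ 2"
    if t: "t > 0" for t
  proof -
    define s where "s = exp 1 * C / 2 * t"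
    have s: "s > 0" using t Cpos by (simp add: s_def)
    have e2: "exp 1 / 2 \<ge> (1::real)" using exp_ge_add_one_self[of 1] by simp
    have h0: "hfun (small_seq M) t \<ge> 0" by (rule hfun_nonneg[OF mp t])
    have "sqrt (hfun (small_seq M) t) \<le> small_seq N k * s ^ k" for k
    proof -
      have "hfun (small_seq M) t \<le> small_seq M (k + k) * t ^ (k + k)"
        by (rule hfun_lower[OF mp t])
      also have "\<dots> \<le> C ^ (k + k) * (small_seq N k * small_seq N k) * t ^ (k + k)"
        using t by (intro mult_right_mono keym) auto
      also have "\<dots> = (small_seq N k * (C * t) ^ k) ^ 2"
        by (simp add: power_add power_mult_distrib power2_eq_square)
      also have "\<dots> \<le> (small_seq N k * s ^ k) ^ 2"
      proof -
        have "(C * t) ^ k \<le> s ^ k"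
          using Cpos t e2 by (intro power_mono) (auto simp: s_def mult_le_cancel_right1 mult.commute mult.left_commute)
        thus ?thesis using np[of k] Cpos t by (intro power_mono[of _ _ 2] mult_left_mono) (auto intro!: mult_nonneg_nonneg)
      qed
      finally show ?thesis using np[of k] s
        by (metis real_sqrt_le_mono real_sqrt_abs abs_of_pos mult_pos_pos zero_less_power)
    qed
    hence "sqrt (hfun (small_seq M) t) \<le> hfun (small_seq N) s"
      unfolding hfun_def by (intro cINF_greatest) auto
    hence "(sqrt (hfun (small_seq M) t)) ^ 2 \<le> (hfun (small_seq N) s) ^ 2"
      using h0 by (intro power_mono) auto
    thus ?thesis using h0 by (simp add: s_def)
  qed
  show ?thesis using part1 part2 by blast
qed

end
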